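(* Let $c_0>0$. There exist constants $c_1,m_1>0$, depending only on $c_0,m,\alpha,\beta$, such that for every $\tau\in(0,1)$ and every time-splitting solution with mesh $\tau$ whose initial data satisfy $\sum_{j\in\mathbb{Z}}(|u_j^0|^2+|v_j^0|^2)\tau\le c_0$, one has for all $j\in\mathbb{Z}$, $n\ge0$: $$|u_j^{n,2}(\tau)|^2\le|u_j^{n,2}(0)|^2+m_1\mathfrak{s}_j^{n,2}(0)\tau+c_1|u_j^{n,2}(0)|^2|v_j^{n,2}(0)|^2\tau,$$ $$|v_j^{n,2}(\tau)|^2\le|v_j^{n,2}(0)|^2+m_1\mathfrak{s}_j^{n,2}(0)\tau+c_1|u_j^{n,2}(0)|^2|v_j^{n,2}(0)|^2\tau,$$ where $\mathfrak{s}_j^{n,2}(s)=|u_j^{n,2}(s)|^2+|v_j^{n,2}(s)|^2$. Furthermore, for every $T>0$ there exists $c_2>0$ depending only on $T,c_0,m,\alpha,\beta$ such that, for all such $\tau$ and data, all $j\in\mathbb{Z}$ and all $0\le n\le[T/\tau]+1$, $$|u_j^n|^2\le c_2\big(|u_{j-n}^0|^2+m_1c_0\big),\qquad |v_j^n|^2\le c_2\big(|v_{j+n}^0|^2+m_1c_0\big).$$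
   Context: Fix constants $m\ge 0$ and $\alpha,\beta\in\mathbb{R}$. Let (N) denote the ODE system on $\mathbb{C}^2$: $\frac{du}{ds}=imv+i\alpha u|v|^2+2i\beta(\bar u v+u\bar v)v$, $\frac{dv}{ds}=imu+i\alpha v|u|^2+2i\beta(\bar u v+u\bar v)u$. Time-splitting scheme with mesh $\tau>0$: given $(u_j^0,v_j^0)_{j\in\mathbb{Z}}\subset\mathbb{C}^2$ with $\sum_j(|u_j^0|^2+|v_j^0|^2)<\infty$, set $(u^{(\tau)},v^{(\tau)})(x,0)=(u_j^0,v_j^0)$ for $x\in[j\tau,(j+1)\tau)$. Inductively, once $(u^{(\tau)},v^{(\tau)})(\cdot,n\tau)$ is defined, set for $t\in[n\tau,(n+1)\tau)$: $u^{(\tau)}(x,t)=u^{(\tau)}(x-(t-n\tau),n\tau)$, $v^{(\tau)}(x,t)=v^{(\tau)}(x+(t-n\tau),n\tau)$; let $(u^{(\tau)},v^{(\tau)})(x,(n+1)\tau-)$ be the left limit in $t$; and for each $x$ define $(u^{(\tau)},v^{(\tau)})(x,(n+1)\tau)$ as the value at $s=\tau$ of the solution of (N) with value $(u^{(\tau)},v^{(\tau)})(x,(n+1)\tau-)$ at $s=0$ (this is globally well defined). Notation: $(u_j^n,v_j^n)=(u^{(\tau)},v^{(\tau)})(j\tau,n\tau)$, $(u_j^{n+1-},v_j^{n+1-})=(u^{(\tau)},v^{(\tau)})(j\tau,(n+1)\tau-)$, and $(u_j^{n,2}(s),v_j^{n,2}(s))$, $s\in[0,\tau]$, is the solution of (N)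 with $(u_j^{n,2}(0),v_j^{n,2}(0))=(u_j^{n+1-},v_j^{n+1-})$, so $(u_j^{n+1},v_j^{n+1})=(u_j^{n,2}(\tau),v_j^{n,2}(\tau))$. $[x]$ denotes the integer part. *)

theory Defs
  imports "HOL-Analysis.Analysis"
begin

definition NF_u :: "real \<Rightarrow> real \<Rightarrow> real \<Rightarrow> complex \<Rightarrow> complex \<Rightarrow> complex" where
  "NF_u m \<alpha> \<beta> u v =
     \<i> * of_real m * v + \<i> * of_real \<alpha> * u * of_real ((cmod v)\<^sup>2)
     + 2 * \<i> * of_real \<beta> * (cnj u * v + u * cnj v) * v"

definition NF_v :: "real \<Rightarrow> real \<Rightarrow> real \<Rightarrow> complex \<Rightarrow> complex \<Rightarrow> complex" where
  "NF_v m \<alpha> \<beta> u v =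
     \<i> * of_real m * u + \<i> * of_real \<alpha> * v * of_real ((cmod u)\<^sup>2)
     + 2 * \<i> * of_real \<beta> * (cnj u * v + u * cnj v) * u"

text \<open>U j n = u_j^n, V j n = v_j^n, and (U2 j n, V2 j n) is the solution of (N) on [0,tau]
  starting from (u_j^{n+1-}, v_j^{n+1-}) = (u_{j-1}^n, v_{j+1}^n) (exact transport by one cell).\<close>
definition time_splitting ::
  "real \<Rightarrow> real \<Rightarrow> real \<Rightarrow> real \<Rightarrow> (int \<Rightarrow> complex) \<Rightarrow> (int \<Rightarrow> complex)
   \<Rightarrow> (int \<Rightarrow> nat \<Rightarrow> complex) \<Rightarrow> (int \<Rightarrow> nat \<Rightarrow> complex)
   \<Rightarrow> (int \<Rightarrow> nat \<Rightarrow> real \<Rightarrow> complex) \<Rightarrow> (int \<Rightarrow> nat \<Rightarrow> real \<Rightarrow> complex) \<Rightarrow> bool" where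
  "time_splitting m \<alpha> \<beta> \<tau> u0 v0 U V U2 V2 \<longleftrightarrow>
     (\<forall>j. U j 0 = u0 j \<and> V j 0 = v0 j) \<and>
     (\<forall>j n. U2 j n 0 = U (j - 1) n \<and> V2 j n 0 = V (j + 1) n \<and>
        (\<forall>s\<in>{0..\<tau>}.
           (U2 j n has_vector_derivative NF_u m \<alpha> \<beta> (U2 j n s) (V2 j n s)) (at s within {0..\<tau>}) \<and>
           (V2 j n has_vector_derivative NF_v m \<alpha> \<beta> (U2 j n s) (V2 j n s)) (at s within {0..\<tau>})) \<and>
        U j (Suc n) = U2 j n \<tau> \<and> V j (Suc n) = V2 j n \<tau>)"

end

theory Submission
  imports Defs
begin

lemma decr_on:
  fixes f f' :: "real \<Rightarrow> real"
  assumes "0 \<le> s" "s \<le> t"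
    and d: "\<And>x. x \<in> {0..t} \<Longrightarrow> (f has_real_derivative f' x) (at x within {0..t})"
    and n: "\<And>x. x \<in> {0..t} \<Longrightarrow> f' x \<le> 0"
  shows "f s \<le> f 0"
proof -
  have "\<exists>x\<in>{0..s}. f s - f 0 = (\<lambda>h. h * f' x) (s - 0)"
  proof (rule mvt_very_simple[OF assms(1)])
    fix x assume "0 \<le> x" "x \<le> s"
    then have "(f has_real_derivative f' x) (at x within {0..s})"
      using d[of x] assms(2) by (auto intro: has_field_derivative_subset)
    then show "(f has_derivative (\<lambda>h. h * f' x)) (at x within {0..s})"
      by (simp add: has_field_derivative_def mult_commute_abs)
  qed
  then obtain x where "x \<in> {0..s}" "f s - f 0 = s * f' x" by auto
  moreover have "f' x \<le> 0" using n[of x] \<open>x \<in> {0..s}\<close> assms(2) by auto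
  ultimately show ?thesis using assms(1) mult_nonneg_nonpos[of s "f' x"] by linarith
qed

lemma normsq_deriv:
  fixes u :: "real \<Rightarrow> complex"
  assumes "(u has_vector_derivative u') (at s within S)"
  shows "((\<lambda>s. (cmod (u s))\<^sup>2) has_real_derivative (2 * Re (cnj (u s) * u'))) (at s within S)"
proof -
  have "((\<lambda>s. u s * cnj (u s)) has_vector_derivative (u s * cnj u' + u' * cnj (u s))) (at s within S)"
    by (intro has_vector_derivative_mult has_vector_derivative_cnj assms)
  from bounded_linear.has_vector_derivative[OF bounded_linear_Re this]
  have "((\<lambda>s. Re (u s * cnj (u s))) has_vector_derivative Re (u s * cnj u' + u' * cnj (u s))) (at s within S)" .
  moreover have "(\<lambda>s. Re (u s * cnj (u s))) = (\<lambda>s. (cmod (u s))\<^sup>2)"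
    by (rule ext) (simp only: cmod_power2, simp add: power2_eq_square)
  moreover have "Re (u s * cnj u' + u' * cnj (u s)) = 2 * Re (cnj (u s) * u')"
    by simp
  ultimately show ?thesis by (simp add: has_real_derivative_iff_has_vector_derivative mult.commute)
qed

lemma Abound:
  fixes u v :: complex and m \<beta> :: real
  assumes "m \<ge> 0"
  shows "\<bar>-2*m*Im (cnj u * v) - 8*\<beta>*Re (cnj u * v)*Im (cnj u * v)\<bar>
     \<le> m * ((cmod u)\<^sup>2 + (cmod v)\<^sup>2) + 4*\<bar>\<beta>\<bar>*(cmod u)\<^sup>2*(cmod v)\<^sup>2"
proof -
  define p where "p = cnj u * v"
  define x where "x = Re p"
  define y where "y = Im p"
  define r where "r = cmod p"
  define a where "a = cmod u"
  define b where "b = cmod v"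
  have cp: "r = a * b" by (simp add: r_def a_def b_def p_def norm_mult)
  have r2: "r\<^sup>2 = x\<^sup>2 + y\<^sup>2" by (simp add: r_def x_def y_def cmod_power2)
  have i1: "\<bar>y\<bar> \<le> r" unfolding y_def r_def by (rule abs_Im_le_cmod)
  have i2: "2 * (a * b) \<le> a\<^sup>2 + b\<^sup>2"
  proof -
    have "0 \<le> (a - b)\<^sup>2" by simp
    then show ?thesis by (simp add: power2_diff)
  qed
  have i3: "2 * (\<bar>x\<bar> * \<bar>y\<bar>) \<le> r\<^sup>2"
  proof -
    have "0 \<le> (\<bar>x\<bar> - \<bar>y\<bar>)\<^sup>2" by simp
    then show ?thesis unfolding r2 by (simp add: power2_diff)
  qed
  have j1: "m*\<bar>y\<bar> \<le> m*(a*b)" using mult_left_mono[OF i1 assms] cp by simp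
  have j5: "m*(2*(a*b)) = 2*(m*(a*b))" by simp
  have j2: "\<bar>\<beta>\<bar>*(2 * (\<bar>x\<bar> * \<bar>y\<bar>)) \<le> \<bar>\<beta>\<bar>*r\<^sup>2" by (rule mult_left_mono[OF i3]) simp
  have j3: "m*(2 * (a * b)) \<le> m*(a\<^sup>2 + b\<^sup>2)" by (rule mult_left_mono[OF i2 assms])
  have j4: "r\<^sup>2 = a\<^sup>2*b\<^sup>2" by (simp add: cp power_mult_distrib)
  have t: "\<bar>-2*m*y - 8*\<beta>*x*y\<bar> \<le> \<bar>-2*m*y\<bar> + \<bar>8*\<beta>*x*y\<bar>" by (rule abs_triangle_ineq4)
  have t1: "\<bar>-2*m*y\<bar> = 2*(m*\<bar>y\<bar>)" using assms by (simp add: abs_mult)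
  have t2: "\<bar>8*\<beta>*x*y\<bar> = 4*(\<bar>\<beta>\<bar>*(2 * (\<bar>x\<bar> * \<bar>y\<bar>)))" by (simp add: abs_mult)
  have t3: "m * (a\<^sup>2 + b\<^sup>2) + 4*\<bar>\<beta>\<bar>*a\<^sup>2*b\<^sup>2 = m * (a\<^sup>2 + b\<^sup>2) + 4*(\<bar>\<beta>\<bar>*r\<^sup>2)" by (simp add: j4)
  have "\<bar>-2*m*y - 8*\<beta>*x*y\<bar> \<le> m * (a\<^sup>2 + b\<^sup>2) + 4*\<bar>\<beta>\<bar>*a\<^sup>2*b\<^sup>2"
    using t t1 t2 t3 j1 j2 j3 j5 by linarith
  then show ?thesis unfolding p_def x_def y_def a_def b_def .
qed
lemma ode_est:
  fixes u v :: "real \<Rightarrow> complex" and m \<alpha> \<beta> \<tau> cc :: real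
  assumes tau: "0 < \<tau>" and m: "0 \<le> m"
    and D: "\<forall>s\<in>{0..\<tau>}. (u has_vector_derivative NF_u m \<alpha> \<beta> (u s) (v s)) (at s within {0..\<tau>}) \<and>
                  (v has_vector_derivative NF_v m \<alpha> \<beta> (u s) (v s)) (at s within {0..\<tau>})"
  shows "(cmod (u \<tau>))\<^sup>2 + (cmod (v \<tau>))\<^sup>2 = (cmod (u 0))\<^sup>2 + (cmod (v 0))\<^sup>2 \<and> (((cmod (u 0))\<^sup>2 + (cmod (v 0))\<^sup>2) * \<tau> \<le> cc \<longrightarrow> ((cmod (u \<tau>))\<^sup>2 \<le> (cmod (u 0))\<^sup>2
            + (m + 4*\<bar>\<beta>\<bar>*exp(4*\<bar>\<beta>\<bar>*cc)*m*cc) * ((cmod (u 0))\<^sup>2 + (cmod (v 0))\<^sup>2) * \<tau>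
            + 4*\<bar>\<beta>\<bar>*exp(4*\<bar>\<beta>\<bar>*cc) * (cmod (u 0))\<^sup>2 * (cmod (v 0))\<^sup>2 * \<tau>
       \<and> (cmod (v \<tau>))\<^sup>2 \<le> (cmod (v 0))\<^sup>2
            + (m + 4*\<bar>\<beta>\<bar>*exp(4*\<bar>\<beta>\<bar>*cc)*m*cc) * ((cmod (u 0))\<^sup>2 + (cmod (v 0))\<^sup>2) * \<tau>
            + 4*\<bar>\<beta>\<bar>*exp(4*\<bar>\<beta>\<bar>*cc) * (cmod (u 0))\<^sup>2 * (cmod (v 0))\<^sup>2 * \<tau>))"
proof -
  define a where "a = (\<lambda>s. (cmod (u s))\<^sup>2)"
  define b where "b = (\<lambda>s. (cmod (v s))\<^sup>2)"
  define A where "A = (\<lambda>s. -2*m*Im (cnj (u s) * v s) - 8*\<beta>*Re (cnj (u s) * v s)*Im (cnj (u s) * v s))"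
  have da: "(a has_real_derivative A s) (at s within {0..\<tau>})" if s: "s \<in> {0..\<tau>}" for s
  proof -
    have "(a has_real_derivative 2 * Re (cnj (u s) * NF_u m \<alpha> \<beta> (u s) (v s))) (at s within {0..\<tau>})"
      unfolding a_def by (rule normsq_deriv) (use D s in auto)
    moreover have "2 * Re (cnj (u s) * NF_u m \<alpha> \<beta> (u s) (v s)) = A s"
      unfolding A_def by (simp add: NF_u_def cmod_power2 algebra_simps power2_eq_square)
    ultimately show ?thesis by simp
  qed
  have db: "(b has_real_derivative - A s) (at s within {0..\<tau>})" if s: "s \<in> {0..\<tau>}" for s
  proof -
    have "(b has_real_derivative 2 * Re (cnj (v s) * NF_v m \<alpha> \<beta> (u s) (v s))) (at s within {0..\<tau>})"
      unfolding b_def by (rule normsq_deriv) (use D s in auto)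
    moreover have "2 * Re (cnj (v s) * NF_v m \<alpha> \<beta> (u s) (v s)) = - A s"
      unfolding A_def by (simp add: NF_v_def cmod_power2 algebra_simps power2_eq_square)
    ultimately show ?thesis by simp
  qed
  have a0: "a s \<ge> 0" for s by (simp add: a_def)
  have b0: "b s \<ge> 0" for s by (simp add: b_def)
  have Ab: "\<bar>A s\<bar> \<le> m*(a s + b s) + 4*\<bar>\<beta>\<bar>*a s*b s" for s
    unfolding A_def a_def b_def by (rule Abound[OF m])
  define S where "S = a 0 + b 0"
  have cons: "a s + b s = S" if s: "s \<in> {0..\<tau>}" for s
  proof -
    have d1: "((\<lambda>s. a s + b s) has_real_derivative 0) (at x within {0..\<tau>})" if "x \<in> {0..\<tau>}" for x
      using DERIV_add[OF da[OF that] db[OF that]] by simp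
    have d2: "((\<lambda>s. - (a s + b s)) has_real_derivative 0) (at x within {0..\<tau>})" if "x \<in> {0..\<tau>}" for x
      using DERIV_minus[OF d1[OF that]] by simp
    have "(\<lambda>s. a s + b s) s \<le> (\<lambda>s. a s + b s) 0"
      by (rule decr_on[where f'="\<lambda>_. 0" and t=\<tau>]) (use s d1 in auto)
    moreover have "(\<lambda>s. - (a s + b s)) s \<le> (\<lambda>s. - (a s + b s)) 0"
      by (rule decr_on[where f'="\<lambda>_. 0" and t=\<tau>]) (use s d2 in auto)
    ultimately show ?thesis by (simp add: S_def)
  qed
  have consr: "(cmod (u \<tau>))\<^sup>2 + (cmod (v \<tau>))\<^sup>2 = (cmod (u 0))\<^sup>2 + (cmod (v 0))\<^sup>2"
    using cons[of \<tau>] tau by (simp add: S_def a_def b_def)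
  have bnd: "((cmod (u 0))\<^sup>2 + (cmod (v 0))\<^sup>2) * \<tau> \<le> cc \<longrightarrow> ((cmod (u \<tau>))\<^sup>2 \<le> (cmod (u 0))\<^sup>2
            + (m + 4*\<bar>\<beta>\<bar>*exp(4*\<bar>\<beta>\<bar>*cc)*m*cc) * ((cmod (u 0))\<^sup>2 + (cmod (v 0))\<^sup>2) * \<tau>
            + 4*\<bar>\<beta>\<bar>*exp(4*\<bar>\<beta>\<bar>*cc) * (cmod (u 0))\<^sup>2 * (cmod (v 0))\<^sup>2 * \<tau>
       \<and> (cmod (v \<tau>))\<^sup>2 \<le> (cmod (v 0))\<^sup>2
            + (m + 4*\<bar>\<beta>\<bar>*exp(4*\<bar>\<beta>\<bar>*cc)*m*cc) * ((cmod (u 0))\<^sup>2 + (cmod (v 0))\<^sup>2) * \<tau>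
            + 4*\<bar>\<beta>\<bar>*exp(4*\<bar>\<beta>\<bar>*cc) * (cmod (u 0))\<^sup>2 * (cmod (v 0))\<^sup>2 * \<tau>)"
  proof
    assume Sc: "((cmod (u 0))\<^sup>2 + (cmod (v 0))\<^sup>2) * \<tau> \<le> cc"
    have S0: "S \<ge> 0" using a0 b0 by (simp add: S_def)
    have Stau: "S*\<tau> \<le> cc" using Sc by (simp add: S_def a_def b_def)
    define q where "q = (\<lambda>s. a s * b s)"
    have dq: "(q has_real_derivative A x * (b x - a x)) (at x within {0..\<tau>})" if "x \<in> {0..\<tau>}" for x
    proof -
      have e: "A x * b x + - A x * a x = A x * (b x - a x)" by (simp add: algebra_simps)
      have "((\<lambda>s. a s * b s) has_real_derivative A x * b x + - A x * a x) (at x within {0..\<tau>})"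
        by (rule DERIV_mult[OF da[OF that] db[OF that]])
      then show ?thesis unfolding q_def e .
    qed
    have dqb: "A x * (b x - a x) \<le> m*S^2 + 4*\<bar>\<beta>\<bar>*S*q x" if x: "x \<in> {0..\<tau>}" for x
    proof -
      have "A x*(b x - a x) \<le> \<bar>A x\<bar>*\<bar>b x - a x\<bar>" by (simp add: abs_mult[symmetric])
      also have "\<dots> \<le> (m*S + 4*\<bar>\<beta>\<bar>*q x) * S"
      proof (rule mult_mono)
        show "\<bar>A x\<bar> \<le> m*S + 4*\<bar>\<beta>\<bar>*q x" using Ab[of x] cons[OF x] by (simp add: q_def mult.assoc)
        show "\<bar>b x - a x\<bar> \<le> S" using cons[OF x] a0[of x] b0[of x] by linarith
        show "0 \<le> m*S + 4*\<bar>\<beta>\<bar>*q x" using m S0 a0[of x] b0[of x] by (simp add: q_def)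
      qed simp
      also have "\<dots> = m*S^2 + 4*\<bar>\<beta>\<bar>*S*q x" by (simp add: algebra_simps power2_eq_square)
      finally show ?thesis .
    qed
    define K where "K = 4*\<bar>\<beta>\<bar>*S"
    have K0: "K \<ge> 0" using S0 by (simp add: K_def)
    define E where "E = exp(4*\<bar>\<beta>\<bar>*cc)"
    have qb: "q x \<le> E * (q 0 + m*S^2*\<tau>)" if x: "x \<in> {0..\<tau>}" for x
    proof -
      define g where "g = (\<lambda>s. q s * exp(-K* s) - m*S^2* s)"
      have dg: "(g has_real_derivative (A y*(b y - a y) * exp(-K*y) + q y * (exp(-K*y) * (-K)) - m*S^2)) (at y within {0..\<tau>})"
        if "y \<in> {0..\<tau>}" for y
      proof -
        have e: "((\<lambda>s. exp(-K * s)) has_real_derivative exp(-K*y) * (-K)) (at y within {0..\<tau>})"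
          by (auto intro!: derivative_eq_intros)
        have l: "((\<lambda>s. m*S^2 * s) has_real_derivative m*S^2) (at y within {0..\<tau>})"
          by (auto intro!: derivative_eq_intros)
        show ?thesis unfolding g_def using DERIV_diff[OF DERIV_mult[OF dq[OF that] e] l] by (simp add: ac_simps)
      qed
      have ng: "A y*(b y - a y) * exp(-K*y) + q y * (exp(-K*y) * (-K)) - m*S^2 \<le> 0"
        if y: "y \<in> {0..\<tau>}" for y
      proof -
        have e1: "exp(-K*y) \<le> 1" using K0 y by simp
        have "A y*(b y - a y) * exp(-K*y) \<le> (m*S^2 + K*q y) * exp(-K*y)"
          using dqb[OF y] by (intro mult_right_mono) (auto simp: K_def)
        moreover have "m*S^2 * exp(-K*y) \<le> m*S^2" using e1 m by (simp add: mult_left_le)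
        moreover have "(m*S^2 + K*q y) * exp(-K*y) = m*S^2*exp(-K*y) + K*q y*exp(-K*y)"
          by (simp only: distrib_right)
        moreover have "q y * (exp(-K*y) * (-K)) = - (K*q y*exp(-K*y))" by simp
        ultimately show ?thesis by linarith
      qed
      have "g x \<le> g 0" by (rule decr_on[where t=\<tau>, OF _ _ dg ng]) (use x in auto)
      then have "q x * exp(-K*x) \<le> q 0 + m*S^2*x" by (simp add: g_def)
      then have "q x * exp(-K*x) * exp(K*x) \<le> (q 0 + m*S^2*x) * exp(K*x)"
        by (rule mult_right_mono) simp
      moreover have ee: "exp(-K*x) * exp(K*x) = 1" by (simp add: exp_add[symmetric])
      moreover have "q x = q x * exp(-K*x) * exp(K*x)" by (simp only: mult.assoc ee mult_1_right)
      ultimately have "q x \<le> (q 0 + m*S^2*x) * exp(K*x)" by linarith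
      also have "\<dots> \<le> (q 0 + m*S^2*\<tau>) * E"
      proof (rule mult_mono)
        show "q 0 + m*S^2*x \<le> q 0 + m*S^2*\<tau>" using x m by (simp add: mult_left_mono)
        have "K*x \<le> K*\<tau>" using x K0 by (simp add: mult_left_mono)
        also have "K*\<tau> \<le> 4*\<bar>\<beta>\<bar>*cc" using Stau by (simp add: K_def mult.assoc mult_left_mono)
        finally show "exp(K*x) \<le> E" by (simp add: E_def)
        show "0 \<le> q 0 + m*S^2*\<tau>" using m tau a0 b0 by (simp add: q_def)
      qed simp
      finally show ?thesis by (simp add: mult.commute)
    qed
    define Q where "Q = E * (q 0 + m*S^2*\<tau>)"
    have Aq: "\<bar>A x\<bar> \<le> m*S + 4*\<bar>\<beta>\<bar>*Q" if x: "x \<in> {0..\<tau>}" for x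
    proof -
      have "4*\<bar>\<beta>\<bar>*q x \<le> 4*\<bar>\<beta>\<bar>*Q" using qb[OF x] by (simp add: Q_def mult_left_mono)
      then show ?thesis using Ab[of x] cons[OF x] by (simp add: q_def mult.assoc)
    qed
    have ta: "a \<tau> \<le> a 0 + (m*S + 4*\<bar>\<beta>\<bar>*Q)*\<tau>"
    proof -
      define h where "h = (\<lambda>s. a s - s * (m*S + 4*\<bar>\<beta>\<bar>*Q))"
      have "h \<tau> \<le> h 0"
      proof (rule decr_on[where t=\<tau>])
        show "(h has_real_derivative A x - (m*S + 4*\<bar>\<beta>\<bar>*Q)) (at x within {0..\<tau>})" if "x \<in> {0..\<tau>}" for x
          unfolding h_def using DERIV_diff[OF da[OF that] DERIV_cmult_right[OF DERIV_ident, of "m*S + 4*\<bar>\<beta>\<bar>*Q"]] by simp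
        show "A x - (m*S + 4*\<bar>\<beta>\<bar>*Q) \<le> 0" if "x \<in> {0..\<tau>}" for x
          using Aq[OF that] by linarith
      qed (use tau in auto)
      then show ?thesis unfolding h_def by (simp add: mult.commute)
    qed
    have tb: "b \<tau> \<le> b 0 + (m*S + 4*\<bar>\<beta>\<bar>*Q)*\<tau>"
    proof -
      define h where "h = (\<lambda>s. b s - s * (m*S + 4*\<bar>\<beta>\<bar>*Q))"
      have "h \<tau> \<le> h 0"
      proof (rule decr_on[where t=\<tau>])
        show "(h has_real_derivative - A x - (m*S + 4*\<bar>\<beta>\<bar>*Q)) (at x within {0..\<tau>})" if "x \<in> {0..\<tau>}" for x
          unfolding h_def using DERIV_diff[OF db[OF that] DERIV_cmult_right[OF DERIV_ident, of "m*S + 4*\<bar>\<beta>\<bar>*Q"]] by simp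
        show "- A x - (m*S + 4*\<bar>\<beta>\<bar>*Q) \<le> 0" if "x \<in> {0..\<tau>}" for x
          using Aq[OF that] by linarith
      qed (use tau in auto)
      then show ?thesis unfolding h_def by (simp add: mult.commute)
    qed
    have E0: "E \<ge> 0" by (simp add: E_def)
    have key: "4*\<bar>\<beta>\<bar>*Q*\<tau> \<le> 4*\<bar>\<beta>\<bar>*E*m*cc*S*\<tau> + 4*\<bar>\<beta>\<bar>*E*(a 0 * b 0)*\<tau>"
    proof -
      have "(4*\<bar>\<beta>\<bar>*E*m*(S*\<tau>)) * (S*\<tau>) \<le> (4*\<bar>\<beta>\<bar>*E*m*(S*\<tau>)) * cc"
        using Stau E0 m S0 tau by (intro mult_left_mono) auto
      moreover have "4*\<bar>\<beta>\<bar>*Q*\<tau> = 4*\<bar>\<beta>\<bar>*E*(a 0*b 0)*\<tau> + (4*\<bar>\<beta>\<bar>*E*m*(S*\<tau>))*(S*\<tau>)"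
        by (simp add: Q_def q_def algebra_simps power2_eq_square)
      moreover have "(4*\<bar>\<beta>\<bar>*E*m*(S*\<tau>))*cc = 4*\<bar>\<beta>\<bar>*E*m*cc*S*\<tau>"
        by (simp add: algebra_simps)
      ultimately show ?thesis by linarith
    qed
    have e1: "(m*S + 4*\<bar>\<beta>\<bar>*Q)*\<tau> = m*S*\<tau> + 4*\<bar>\<beta>\<bar>*Q*\<tau>" by (simp add: algebra_simps)
    have e2: "(m + 4*\<bar>\<beta>\<bar>*E*m*cc)*S*\<tau> = m*S*\<tau> + 4*\<bar>\<beta>\<bar>*E*m*cc*S*\<tau>" by (simp add: algebra_simps)
    have e3: "4*\<bar>\<beta>\<bar>*E*(a 0*b 0)*\<tau> = 4*\<bar>\<beta>\<bar>*E*a 0*b 0*\<tau>" by (simp add: algebra_simps)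
    have fa: "a \<tau> \<le> a 0 + (m + 4*\<bar>\<beta>\<bar>*E*m*cc)*S*\<tau> + 4*\<bar>\<beta>\<bar>*E*a 0*b 0*\<tau>"
      using ta key e1 e2 e3 by linarith
    have fb: "b \<tau> \<le> b 0 + (m + 4*\<bar>\<beta>\<bar>*E*m*cc)*S*\<tau> + 4*\<bar>\<beta>\<bar>*E*a 0*b 0*\<tau>"
      using tb key e1 e2 e3 by linarith
    show "(cmod (u \<tau>))\<^sup>2 \<le> (cmod (u 0))\<^sup>2
              + (m + 4*\<bar>\<beta>\<bar>*exp(4*\<bar>\<beta>\<bar>*cc)*m*cc) * ((cmod (u 0))\<^sup>2 + (cmod (v 0))\<^sup>2) * \<tau>
              + 4*\<bar>\<beta>\<bar>*exp(4*\<bar>\<beta>\<bar>*cc) * (cmod (u 0))\<^sup>2 * (cmod (v 0))\<^sup>2 * \<tau>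
         \<and> (cmod (v \<tau>))\<^sup>2 \<le> (cmod (v 0))\<^sup>2
              + (m + 4*\<bar>\<beta>\<bar>*exp(4*\<bar>\<beta>\<bar>*cc)*m*cc) * ((cmod (u 0))\<^sup>2 + (cmod (v 0))\<^sup>2) * \<tau>
              + 4*\<bar>\<beta>\<bar>*exp(4*\<bar>\<beta>\<bar>*cc) * (cmod (u 0))\<^sup>2 * (cmod (v 0))\<^sup>2 * \<tau>"
      using fa fb unfolding a_def b_def S_def E_def by simp
  qed
  show ?thesis using consr bnd by blast
qed

lemma shiftm: "(\<Sum>i\<in>{A..B}. f (i - 1)) = (\<Sum>i\<in>{A-1..B-1::int}. f i)"
  by (rule sum.reindex_bij_witness[of _ "\<lambda>i. i+1" "\<lambda>i. i-1"]) auto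

lemma shiftp: "(\<Sum>i\<in>{A..B}. f (i + 1)) = (\<Sum>i\<in>{A+1..B+1::int}. f i)"
  by (rule sum.reindex_bij_witness[of _ "\<lambda>i. i-1" "\<lambda>i. i+1"]) auto

lemma window_step:
  fixes w z :: "nat \<Rightarrow> int \<Rightarrow> real"
  assumes cons: "\<And>k j. w (Suc k) j + z (Suc k) j = w k (j-1) + z k (j+1)"
  shows "(\<Sum>i\<in>{A..B}. w (Suc k) i + z (Suc k) i) = (\<Sum>i\<in>{A-1..B-1}. w k i) + (\<Sum>i\<in>{A+1..B+1}. z k i)"
proof -
  have "(\<Sum>i\<in>{A..B}. w (Suc k) i + z (Suc k) i) = (\<Sum>i\<in>{A..B}. w k (i-1) + z k (i+1))"
    using cons by simp
  also have "\<dots> = (\<Sum>i\<in>{A..B}. w k (i-1)) + (\<Sum>i\<in>{A..B}. z k (i+1))" by (rule sum.distrib)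
  also have "\<dots> = (\<Sum>i\<in>{A-1..B-1}. w k i) + (\<Sum>i\<in>{A+1..B+1}. z k i)"
    by (simp only: shiftm shiftp)
  finally show ?thesis .
qed

lemma window_bound:
  fixes w z :: "nat \<Rightarrow> int \<Rightarrow> real"
  assumes nw: "\<And>k i. w k i \<ge> 0" and nz: "\<And>k i. z k i \<ge> 0"
    and cons: "\<And>k j. w (Suc k) j + z (Suc k) j = w k (j-1) + z k (j+1)"
    and init: "\<And>A B. (\<Sum>i\<in>{A..B}. w 0 i + z 0 i) \<le> M"
  shows "(\<Sum>i\<in>{A..B}. w n i + z n i) \<le> M"
proof (induction n arbitrary: A B)
  case 0
  then show ?case by (rule init)
next
  case (Suc n)
  have "(\<Sum>i\<in>{A..B}. w (Suc n) i + z (Suc n) i) = (\<Sum>i\<in>{A-1..B-1}. w n i) + (\<Sum>i\<in>{A+1..B+1}. z n i)"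
    by (rule window_step[of w z, OF cons])
  also have "\<dots> \<le> (\<Sum>i\<in>{A-1..B+1}. w n i) + (\<Sum>i\<in>{A-1..B+1}. z n i)"
    by (intro add_mono sum_mono2) (auto simp: nw nz)
  also have "\<dots> = (\<Sum>i\<in>{A-1..B+1}. w n i + z n i)" by (rule sum.distrib[symmetric])
  also have "\<dots> \<le> M" by (rule Suc.IH)
  finally show ?case .
qed

lemma flux:
  fixes w z :: "nat \<Rightarrow> int \<Rightarrow> real"
  assumes nw: "\<And>k i. w k i \<ge> 0" and nz: "\<And>k i. z k i \<ge> 0"
    and cons: "\<And>k j. w (Suc k) j + z (Suc k) j = w k (j-1) + z k (j+1)"
    and init: "\<And>A B. (\<Sum>i\<in>{A..B}. w 0 i + z 0 i) \<le> M"
  shows "(\<Sum>k<N. z k (P + int k + 2)) \<le> M"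
proof -
  define L where "L = P + 2 * int N + 2"
  define E where "E = (\<lambda>k. \<Sum>i\<in>{P + int k + 1 .. L - int k}. w k i + z k i)"
  have stepE: "E (Suc k) + z k (P + int k + 2) \<le> E k" if k: "k < N" for k
  proof -
    have E1: "E (Suc k) = (\<Sum>i\<in>{P + int k + 1 .. L - int k - 2}. w k i) + (\<Sum>i\<in>{P + int k + 3 .. L - int k}. z k i)"
    proof -
      have "E (Suc k) = (\<Sum>i\<in>{(P + int k + 2) .. (L - int k - 1)}. w (Suc k) i + z (Suc k) i)"
        unfolding E_def by (simp add: algebra_simps)
      also have "\<dots> = (\<Sum>i\<in>{P + int k + 2 - 1 .. L - int k - 1 - 1}. w k i) + (\<Sum>i\<in>{P + int k + 2 + 1 .. L - int k - 1 + 1}. z k i)"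
        by (rule window_step[of w z, OF cons])
      also have "\<dots> = (\<Sum>i\<in>{P + int k + 1 .. L - int k - 2}. w k i) + (\<Sum>i\<in>{P + int k + 3 .. L - int k}. z k i)"
        by (simp add: algebra_simps)
      finally show ?thesis .
    qed
    have le: "P + int k + 2 \<le> L - int k" using k by (simp add: L_def)
    have s1: "(\<Sum>i\<in>{P + int k + 1 .. L - int k - 2}. w k i) \<le> (\<Sum>i\<in>{P + int k + 1 .. L - int k}. w k i)"
      by (intro sum_mono2) (auto simp: nw)
    have ins: "{P + int k + 2 .. L - int k} = insert (P + int k + 2) {P + int k + 3 .. L - int k}"
      using le by auto
    have s2: "z k (P + int k + 2) + (\<Sum>i\<in>{P + int k + 3 .. L - int k}. z k i) = (\<Sum>i\<in>{P + int k + 2 .. L - int k}. z k i)"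
      unfolding ins by (subst sum.insert) auto
    have s3: "(\<Sum>i\<in>{P + int k + 2 .. L - int k}. z k i) \<le> (\<Sum>i\<in>{P + int k + 1 .. L - int k}. z k i)"
      by (intro sum_mono2) (auto simp: nz)
    have E0: "E k = (\<Sum>i\<in>{P + int k + 1 .. L - int k}. w k i) + (\<Sum>i\<in>{P + int k + 1 .. L - int k}. z k i)"
      unfolding E_def by (rule sum.distrib)
    show ?thesis using E1 E0 s1 s2 s3 by linarith
  qed
  have ind: "(\<Sum>k<K. z k (P + int k + 2)) + E K \<le> E 0" if "K \<le> N" for K
    using that
  proof (induction K)
    case 0 then show ?case by simp
  next
    case (Suc K)
    then have "(\<Sum>k<K. z k (P + int k + 2)) + E K \<le> E 0" by simp
    moreover have "E (Suc K) + z K (P + int K + 2) \<le> E K" using Suc.prems by (intro stepE) simp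
    ultimately show ?case by simp
  qed
  have "E N \<ge> 0" unfolding E_def by (intro sum_nonneg) (simp add: nw nz add_nonneg_nonneg)
  moreover have "E 0 \<le> M" unfolding E_def by (rule init)
  ultimately show ?thesis using ind[of N] by simp
qed

lemma dgron:
  fixes a x y :: "nat \<Rightarrow> real"
  assumes st: "\<And>k. k < N \<Longrightarrow> a (Suc k) \<le> a k * (1 + x k) + y k"
    and x0: "\<And>k. x k \<ge> 0" and y0: "\<And>k. y k \<ge> 0" and a0: "a 0 \<ge> 0"
  shows "a N \<le> exp (\<Sum>k<N. x k) * (a 0 + (\<Sum>k<N. y k))"
  using st
proof (induction N)
  case 0 then show ?case by simp
next
  case (Suc N)
  define X where "X = (\<Sum>k<N. x k)"
  define Y where "Y = (\<Sum>k<N. y k)"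
  have IH: "a N \<le> exp X * (a 0 + Y)" unfolding X_def Y_def using Suc by simp
  have Y0: "Y \<ge> 0" unfolding Y_def by (intro sum_nonneg) (simp add: y0)
  have X0: "X \<ge> 0" unfolding X_def by (intro sum_nonneg) (simp add: x0)
  have "a (Suc N) \<le> a N * (1 + x N) + y N" using Suc.prems by simp
  also have "\<dots> \<le> exp X * (a 0 + Y) * (1 + x N) + y N"
    using IH x0[of N] by (intro add_right_mono mult_right_mono) auto
  also have "\<dots> \<le> exp X * (a 0 + Y) * exp (x N) + exp (X + x N) * y N"
  proof (intro add_mono mult_left_mono)
    show "1 + x N \<le> exp (x N)" by (rule exp_ge_add_one_self)
    show "0 \<le> exp X * (a 0 + Y)" using a0 Y0 by simp
    have "1 \<le> exp (X + x N)" using X0 x0[of N] by simp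
    then show "y N \<le> exp (X + x N) * y N" using y0[of N] by (simp add: mult_le_cancel_right1)
  qed
  also have "\<dots> = exp (X + x N) * (a 0 + (Y + y N))"
    by (simp add: exp_add algebra_simps)
  finally show ?case by (simp add: X_def Y_def)
qed


lemma char_bound:
  fixes w z :: "nat \<Rightarrow> int \<Rightarrow> real"
  assumes nw: "\<And>k i. w k i \<ge> 0" and nz: "\<And>k i. z k i \<ge> 0"
    and cons: "\<And>k j. w (Suc k) j + z (Suc k) j = w k (j-1) + z k (j+1)"
    and init: "\<And>A B. (\<Sum>i\<in>{A..B}. w 0 i + z 0 i) \<le> M"
    and Mt: "M * \<tau> \<le> c0" and tau: "0 < \<tau>" and m1: "0 \<le> m1" and c1: "0 \<le> c1"
    and step: "\<And>k j. w (Suc k) j \<le> w k (j-1) + m1*(w k (j-1) + z k (j+1))*\<tau> + c1*w k (j-1)*z k (j+1)*\<tau>"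
  shows "w n j \<le> exp (m1*\<tau>*n + c1*c0) * (w 0 (j - int n) + m1*c0)"
proof -
  define P where "P = j - int n"
  define a where "a = (\<lambda>k. w k (P + int k))"
  define b where "b = (\<lambda>k. z k (P + int k + 2))"
  define x where "x = (\<lambda>k. m1*\<tau> + c1*\<tau>*b k)"
  define y where "y = (\<lambda>k. m1*\<tau>*b k)"
  have b0: "b k \<ge> 0" for k by (simp add: b_def nz)
  have st: "a (Suc k) \<le> a k * (1 + x k) + y k" for k
  proof -
    have "a (Suc k) = w (Suc k) (P + int k + 1)" unfolding a_def by (simp add: ac_simps)
    also have "\<dots> \<le> w k (P + int k) + m1*(w k (P + int k) + z k (P + int k + 2))*\<tau> + c1*w k (P + int k)*z k (P + int k + 2)*\<tau>"
      using step[of k "P + int k + 1"] by (simp add: add.assoc)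
    also have "\<dots> = a k * (1 + x k) + y k"
      by (simp add: a_def b_def x_def y_def algebra_simps)
    finally show ?thesis .
  qed
  have H: "a n \<le> exp (\<Sum>k<n. x k) * (a 0 + (\<Sum>k<n. y k))"
    by (rule dgron[where a=a and x=x and y=y, OF st]) (auto simp: x_def y_def b0 m1 c1 tau a_def nw less_imp_le)
  have Sb: "(\<Sum>k<n. b k) \<le> M" unfolding b_def by (rule flux[where w=w and z=z and N=n and P=P, OF nw nz cons init])
  have tb: "\<tau>*(\<Sum>k<n. b k) \<le> c0"
  proof -
    have "\<tau>*(\<Sum>k<n. b k) \<le> \<tau>*M" using Sb tau by (simp add: mult_left_mono)
    then show ?thesis using Mt by (simp add: mult.commute)
  qed
  have sx: "(\<Sum>k<n. x k) = m1*\<tau>*n + c1*(\<tau>*(\<Sum>k<n. b k))"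
    by (simp add: x_def sum.distrib sum_distrib_left mult.assoc)
  have sy: "(\<Sum>k<n. y k) = m1*(\<tau>*(\<Sum>k<n. b k))"
    by (simp add: y_def sum_distrib_left mult.assoc)
  have l1: "c1*(\<tau>*(\<Sum>k<n. b k)) \<le> c1*c0" using tb c1 by (rule mult_left_mono)
  have l2: "m1*(\<tau>*(\<Sum>k<n. b k)) \<le> m1*c0" using tb m1 by (rule mult_left_mono)
  have a00: "a 0 \<ge> 0" by (simp add: a_def nw)
  have Y0: "0 \<le> (\<Sum>k<n. y k)" by (intro sum_nonneg) (use b0 m1 tau in \<open>simp add: y_def\<close>)
  have "exp (\<Sum>k<n. x k) * (a 0 + (\<Sum>k<n. y k)) \<le> exp (m1*\<tau>*n + c1*c0) * (a 0 + m1*c0)"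
  proof (rule mult_mono)
    show "exp (\<Sum>k<n. x k) \<le> exp (m1*\<tau>*n + c1*c0)" using sx l1 by simp
    show "a 0 + (\<Sum>k<n. y k) \<le> a 0 + m1*c0" using sy l2 by simp
    show "0 \<le> exp (m1*\<tau>*n + c1*c0)" by simp
    show "0 \<le> a 0 + (\<Sum>k<n. y k)" using a00 Y0 by simp
  qed
  moreover have "a n = w n j" by (simp add: a_def P_def)
  moreover have "a 0 = w 0 (j - int n)" by (simp add: a_def P_def)
  ultimately show ?thesis using H by simp
qed

lemma weaken:
  fixes X a p p' q q' S t x y :: real
  assumes "X \<le> a + p*S*t + q*x*y*t" "p \<le> p'" "q \<le> q'" "S \<ge> 0" "t \<ge> 0" "x \<ge> 0" "y \<ge> 0"
  shows "X \<le> a + p'*S*t + q'*x*y*t"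
proof -
  have "p*S*t \<le> p'*S*t" using assms by (intro mult_right_mono) auto
  moreover have "q*x*y*t \<le> q'*x*y*t" using assms by (intro mult_right_mono) auto
  ultimately show ?thesis using assms(1) by linarith
qed

lemma sum_le_infsum_int:
  fixes f :: "int \<Rightarrow> real"
  assumes "f summable_on UNIV" "\<And>i. f i \<ge> 0"
  shows "(\<Sum>i\<in>{A..B}. f i) \<le> infsum f UNIV"
proof -
  have "infsum f {A..B} \<le> infsum f UNIV"
    by (rule infsum_mono_neutral) (use assms in auto)
  then show ?thesis by simp
qed

lemma main_core:
  fixes m \<alpha> \<beta> \<tau> c0 :: real and u0 v0 :: "int \<Rightarrow> complex"
    and U V :: "int \<Rightarrow> nat \<Rightarrow> complex" and U2 V2 :: "int \<Rightarrow> nat \<Rightarrow> real \<Rightarrow> complex"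
  assumes m: "m \<ge> 0" and tau: "0 < \<tau>" and c0: "c0 > 0"
    and summ: "(\<lambda>j. (cmod (u0 j))\<^sup>2 + (cmod (v0 j))\<^sup>2) summable_on UNIV"
    and inf: "(\<Sum>\<^sub>\<infinity>j. ((cmod (u0 j))\<^sup>2 + (cmod (v0 j))\<^sup>2) * \<tau>) \<le> c0"
    and ts: "time_splitting m \<alpha> \<beta> \<tau> u0 v0 U V U2 V2"
  defines "c1 \<equiv> 4*\<bar>\<beta>\<bar>*exp(4*\<bar>\<beta>\<bar>*c0) + 1"
    and "m1 \<equiv> m + 4*\<bar>\<beta>\<bar>*exp(4*\<bar>\<beta>\<bar>*c0)*m*c0 + 1"
  shows "(\<forall>j n.
          (cmod (U2 j n \<tau>))\<^sup>2 \<le> (cmod (U2 j n 0))\<^sup>2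
             + m1 * ((cmod (U2 j n 0))\<^sup>2 + (cmod (V2 j n 0))\<^sup>2) * \<tau>
             + c1 * (cmod (U2 j n 0))\<^sup>2 * (cmod (V2 j n 0))\<^sup>2 * \<tau> \<and>
          (cmod (V2 j n \<tau>))\<^sup>2 \<le> (cmod (V2 j n 0))\<^sup>2
             + m1 * ((cmod (U2 j n 0))\<^sup>2 + (cmod (V2 j n 0))\<^sup>2) * \<tau>
             + c1 * (cmod (U2 j n 0))\<^sup>2 * (cmod (V2 j n 0))\<^sup>2 * \<tau>)
     \<and> (\<forall>j n. (cmod (U j n))\<^sup>2 \<le> exp (m1*\<tau>*n + c1*c0) * ((cmod (u0 (j - int n)))\<^sup>2 + m1 * c0) \<and>
          (cmod (V j n))\<^sup>2 \<le> exp (m1*\<tau>*n + c1*c0) * ((cmod (v0 (j + int n)))\<^sup>2 + m1 * c0))"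
proof -
  have U0: "\<And>j. U j 0 = u0 j" and V0: "\<And>j. V j 0 = v0 j" using ts by (auto simp: time_splitting_def)
  have I1: "\<And>j n. U2 j n 0 = U (j - 1) n" and I2: "\<And>j n. V2 j n 0 = V (j + 1) n"
    using ts by (auto simp: time_splitting_def)
  have S1: "\<And>j n. U j (Suc n) = U2 j n \<tau>" and S2: "\<And>j n. V j (Suc n) = V2 j n \<tau>"
    using ts by (auto simp: time_splitting_def)
  have D: "\<And>j n. \<forall>s\<in>{0..\<tau>}. (U2 j n has_vector_derivative NF_u m \<alpha> \<beta> (U2 j n s) (V2 j n s)) (at s within {0..\<tau>}) \<and>
                  (V2 j n has_vector_derivative NF_v m \<alpha> \<beta> (U2 j n s) (V2 j n s)) (at s within {0..\<tau>})"
    using ts by (auto simp: time_splitting_def)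
  define f where "f = (\<lambda>j. (cmod (u0 j))\<^sup>2 + (cmod (v0 j))\<^sup>2)"
  define M where "M = infsum f UNIV"
  have Mt: "M * \<tau> \<le> c0"
  proof -
    have "(\<Sum>\<^sub>\<infinity>j. f j * \<tau>) = M * \<tau>" unfolding M_def by (rule infsum_cmult_left) (use summ in \<open>simp add: f_def\<close>)
    then show ?thesis using inf by (simp add: f_def)
  qed
  define w where "w = (\<lambda>k i. (cmod (U i k))\<^sup>2)"
  define z where "z = (\<lambda>k i. (cmod (V i k))\<^sup>2)"
  have nw: "\<And>k i. w k i \<ge> 0" and nz: "\<And>k i. z k i \<ge> 0" by (simp_all add: w_def z_def)
  define E where "E = exp(4*\<bar>\<beta>\<bar>*c0)"
  have E0: "E \<ge> 0" by (simp add: E_def)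
  note oe = ode_est[OF tau m D, where cc=c0]
  have cons: "w (Suc k) j + z (Suc k) j = w k (j-1) + z k (j+1)" for k j
    using conjunct1[OF oe[of j k]] by (simp add: w_def z_def S1 S2 I1 I2)
  have init: "(\<Sum>i\<in>{A..B}. w 0 i + z 0 i) \<le> M" for A B
  proof -
    have "sum f {A..B} \<le> infsum f UNIV" by (rule sum_le_infsum_int) (use summ in \<open>auto simp: f_def\<close>)
    then show ?thesis by (simp add: M_def w_def z_def U0 V0 f_def)
  qed
  have Sc: "((cmod (U2 j n 0))\<^sup>2 + (cmod (V2 j n 0))\<^sup>2) * \<tau> \<le> c0" for j n
  proof -
    have "w n (j-1) + z n (j+1) \<le> (w n (j-1) + z n (j-1)) + (w n (j+1) + z n (j+1))"
      using nw nz by (smt (verit))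
    also have "\<dots> = (\<Sum>i\<in>{j-1, j+1}. w n i + z n i)" by simp
    also have "\<dots> \<le> (\<Sum>i\<in>{j-1..j+1}. w n i + z n i)"
      by (rule sum_mono2) (auto simp: nw nz add_nonneg_nonneg)
    also have "\<dots> \<le> M" by (rule window_bound[of w z, OF nw nz cons init])
    finally have "w n (j-1) + z n (j+1) \<le> M" .
    then have "(w n (j-1) + z n (j+1)) * \<tau> \<le> M * \<tau>" using tau by (simp add: mult_right_mono)
    then show ?thesis using Mt by (simp add: w_def z_def I1 I2)
  qed
  have c1le: "4*\<bar>\<beta>\<bar>*exp(4*\<bar>\<beta>\<bar>*c0) \<le> c1" by (simp add: c1_def)
  have m1le: "m + 4*\<bar>\<beta>\<bar>*exp(4*\<bar>\<beta>\<bar>*c0)*m*c0 \<le> m1" by (simp add: m1_def)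
  have P1: "(cmod (U2 j n \<tau>))\<^sup>2 \<le> (cmod (U2 j n 0))\<^sup>2
             + m1 * ((cmod (U2 j n 0))\<^sup>2 + (cmod (V2 j n 0))\<^sup>2) * \<tau>
             + c1 * (cmod (U2 j n 0))\<^sup>2 * (cmod (V2 j n 0))\<^sup>2 * \<tau> \<and>
          (cmod (V2 j n \<tau>))\<^sup>2 \<le> (cmod (V2 j n 0))\<^sup>2
             + m1 * ((cmod (U2 j n 0))\<^sup>2 + (cmod (V2 j n 0))\<^sup>2) * \<tau>
             + c1 * (cmod (U2 j n 0))\<^sup>2 * (cmod (V2 j n 0))\<^sup>2 * \<tau>" for j n
  proof -
    from mp[OF conjunct2[OF oe[of j n]] Sc[of j n]]
    have A: "(cmod (U2 j n \<tau>))\<^sup>2 \<le> (cmod (U2 j n 0))\<^sup>2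
            + (m + 4*\<bar>\<beta>\<bar>*exp(4*\<bar>\<beta>\<bar>*c0)*m*c0) * ((cmod (U2 j n 0))\<^sup>2 + (cmod (V2 j n 0))\<^sup>2) * \<tau>
            + 4*\<bar>\<beta>\<bar>*exp(4*\<bar>\<beta>\<bar>*c0) * (cmod (U2 j n 0))\<^sup>2 * (cmod (V2 j n 0))\<^sup>2 * \<tau>"
      and B: "(cmod (V2 j n \<tau>))\<^sup>2 \<le> (cmod (V2 j n 0))\<^sup>2
            + (m + 4*\<bar>\<beta>\<bar>*exp(4*\<bar>\<beta>\<bar>*c0)*m*c0) * ((cmod (U2 j n 0))\<^sup>2 + (cmod (V2 j n 0))\<^sup>2) * \<tau>
            + 4*\<bar>\<beta>\<bar>*exp(4*\<bar>\<beta>\<bar>*c0) * (cmod (U2 j n 0))\<^sup>2 * (cmod (V2 j n 0))\<^sup>2 * \<tau>"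
      by auto
    show ?thesis
      using weaken[OF A m1le c1le] weaken[OF B m1le c1le] tau by auto
  qed
  have stepw: "w (Suc k) j \<le> w k (j-1) + m1*(w k (j-1) + z k (j+1))*\<tau> + c1*w k (j-1)*z k (j+1)*\<tau>" for k j
    using conjunct1[OF P1[of j k]] by (simp add: w_def z_def S1 I1 I2)
  have stepz: "z (Suc k) j \<le> z k (j+1) + m1*(w k (j-1) + z k (j+1))*\<tau> + c1*w k (j-1)*z k (j+1)*\<tau>" for k j
    using conjunct2[OF P1[of j k]] by (simp add: w_def z_def S2 I1 I2)
  have m1p: "m1 \<ge> 0"
  proof -
    have "0 \<le> 4*\<bar>\<beta>\<bar>*exp(4*\<bar>\<beta>\<bar>*c0)*m*c0" using m c0 by (intro mult_nonneg_nonneg) auto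
    then show ?thesis using m by (simp add: m1_def)
  qed
  have c1p: "c1 \<ge> 0" by (simp add: c1_def)
  have W: "w n j \<le> exp(m1*\<tau>*n + c1*c0) * (w 0 (j - int n) + m1*c0)" for n j
    by (rule char_bound[of w z, OF nw nz cons init Mt tau m1p c1p stepw])
  define w' where "w' = (\<lambda>k i. z k (-i))"
  define z' where "z' = (\<lambda>k i. w k (-i))"
  have nw': "\<And>k i. w' k i \<ge> 0" and nz': "\<And>k i. z' k i \<ge> 0" by (simp_all add: w'_def z'_def nw nz)
  have e1: "w' k (j-1) = z k (-j+1)" for k j unfolding w'_def by (rule arg_cong[where f="z k"]) simp
  have e2: "z' k (j+1) = w k (-j-1)" for k j unfolding z'_def by (rule arg_cong[where f="w k"]) simp
  have cons': "w' (Suc k) j + z' (Suc k) j = w' k (j-1) + z' k (j+1)" for k j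
  proof -
    have "w' (Suc k) j + z' (Suc k) j = w k (-j - 1) + z k (-j + 1)"
      using cons[of k "-j"] by (simp add: w'_def z'_def)
    then show ?thesis by (simp add: e1 e2)
  qed
  have init': "(\<Sum>i\<in>{A..B}. w' 0 i + z' 0 i) \<le> M" for A B
  proof -
    have "(\<Sum>i\<in>{A..B}. w' 0 i + z' 0 i) = (\<Sum>i\<in>{-B..-A}. w 0 i + z 0 i)"
      unfolding w'_def z'_def
      by (rule sum.reindex_bij_witness[of _ uminus uminus]) auto
    then show ?thesis using init[of "-B" "-A"] by simp
  qed
  have stepw': "w' (Suc k) j \<le> w' k (j-1) + m1*(w' k (j-1) + z' k (j+1))*\<tau> + c1*w' k (j-1)*z' k (j+1)*\<tau>" for k j
  proof -
    have h: "z (Suc k) (-j) \<le> z k (-j+1) + m1*(w k (-j-1) + z k (-j+1))*\<tau> + c1*w k (-j-1)*z k (-j+1)*\<tau>"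
      using stepz[of k "-j"] by simp
    have f1: "m1*(w k (-j-1) + z k (-j+1))*\<tau> = m1*(z k (-j+1) + w k (-j-1))*\<tau>" by (simp add: add.commute)
    have f2: "c1*w k (-j-1)*z k (-j+1)*\<tau> = c1*z k (-j+1)*w k (-j-1)*\<tau>" by (simp add: mult_ac)
    have f3: "w' (Suc k) j = z (Suc k) (-j)" by (simp add: w'_def)
    show ?thesis unfolding e1 e2 f3 using h f1 f2 by linarith
  qed
  have W': "w' n j \<le> exp(m1*\<tau>*n + c1*c0) * (w' 0 (j - int n) + m1*c0)" for n j
    by (rule char_bound[of w' z', OF nw' nz' cons' init' Mt tau m1p c1p stepw'])
  show ?thesis
  proof (intro conjI allI)
    fix j n
    show "(cmod (U2 j n \<tau>))\<^sup>2 \<le> (cmod (U2 j n 0))\<^sup>2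
             + m1 * ((cmod (U2 j n 0))\<^sup>2 + (cmod (V2 j n 0))\<^sup>2) * \<tau>
             + c1 * (cmod (U2 j n 0))\<^sup>2 * (cmod (V2 j n 0))\<^sup>2 * \<tau>"
      using P1[of j n] by blast
    show "(cmod (V2 j n \<tau>))\<^sup>2 \<le> (cmod (V2 j n 0))\<^sup>2
             + m1 * ((cmod (U2 j n 0))\<^sup>2 + (cmod (V2 j n 0))\<^sup>2) * \<tau>
             + c1 * (cmod (U2 j n 0))\<^sup>2 * (cmod (V2 j n 0))\<^sup>2 * \<tau>"
      using P1[of j n] by blast
    show "(cmod (U j n))\<^sup>2 \<le> exp (m1*\<tau>*n + c1*c0) * ((cmod (u0 (j - int n)))\<^sup>2 + m1 * c0)"
      using W[of n j] by (simp add: w_def U0)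
    show "(cmod (V j n))\<^sup>2 \<le> exp (m1*\<tau>*n + c1*c0) * ((cmod (v0 (j + int n)))\<^sup>2 + m1 * c0)"
      using W'[of n "-j"] by (simp add: w'_def z_def V0 add.commute)
  qed
qed

theorem lemma2p4:
  fixes m \<alpha> \<beta> :: real
  assumes "m \<ge> 0"
  shows "\<forall>c0>0. \<exists>c1>0. \<exists>m1>0.
    (\<forall>\<tau> u0 v0 U V U2 V2.
       0 < \<tau> \<and> \<tau> < 1 \<and>
       (\<lambda>j. (cmod (u0 j))\<^sup>2 + (cmod (v0 j))\<^sup>2) summable_on UNIV \<and>
       (\<Sum>\<^sub>\<infinity>j. ((cmod (u0 j))\<^sup>2 + (cmod (v0 j))\<^sup>2) * \<tau>) \<le> c0 \<and>
       time_splitting m \<alpha> \<beta> \<tau> u0 v0 U V U2 V2 \<longrightarrow>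
       (\<forall>j n.
          (cmod (U2 j n \<tau>))\<^sup>2 \<le> (cmod (U2 j n 0))\<^sup>2
             + m1 * ((cmod (U2 j n 0))\<^sup>2 + (cmod (V2 j n 0))\<^sup>2) * \<tau>
             + c1 * (cmod (U2 j n 0))\<^sup>2 * (cmod (V2 j n 0))\<^sup>2 * \<tau> \<and>
          (cmod (V2 j n \<tau>))\<^sup>2 \<le> (cmod (V2 j n 0))\<^sup>2
             + m1 * ((cmod (U2 j n 0))\<^sup>2 + (cmod (V2 j n 0))\<^sup>2) * \<tau>
             + c1 * (cmod (U2 j n 0))\<^sup>2 * (cmod (V2 j n 0))\<^sup>2 * \<tau>)) \<and>
    (\<forall>T>0. \<exists>c2>0. \<forall>\<tau> u0 v0 U V U2 V2.
       0 < \<tau> \<and> \<tau> < 1 \<and>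
       (\<lambda>j. (cmod (u0 j))\<^sup>2 + (cmod (v0 j))\<^sup>2) summable_on UNIV \<and>
       (\<Sum>\<^sub>\<infinity>j. ((cmod (u0 j))\<^sup>2 + (cmod (v0 j))\<^sup>2) * \<tau>) \<le> c0 \<and>
       time_splitting m \<alpha> \<beta> \<tau> u0 v0 U V U2 V2 \<longrightarrow>
       (\<forall>j n. n \<le> nat \<lfloor>T / \<tau>\<rfloor> + 1 \<longrightarrow>
          (cmod (U j n))\<^sup>2 \<le> c2 * ((cmod (u0 (j - int n)))\<^sup>2 + m1 * c0) \<and>
          (cmod (V j n))\<^sup>2 \<le> c2 * ((cmod (v0 (j + int n)))\<^sup>2 + m1 * c0)))"
proof (intro allI, rule impI)
  fix c0 :: real assume c0: "c0 > 0"
  define c1 where "c1 = 4*\<bar>\<beta>\<bar>*exp(4*\<bar>\<beta>\<bar>*c0) + 1"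
  define m1 where "m1 = m + 4*\<bar>\<beta>\<bar>*exp(4*\<bar>\<beta>\<bar>*c0)*m*c0 + 1"
  have c1p: "c1 > 0" unfolding c1_def by (simp add: add_nonneg_pos)
  have m1p: "m1 > 0"
  proof -
    have "0 \<le> 4*\<bar>\<beta>\<bar>*exp(4*\<bar>\<beta>\<bar>*c0)*m*c0" using assms c0 by (intro mult_nonneg_nonneg) auto
    then show ?thesis using assms unfolding m1_def by linarith
  qed
  note core = main_core[OF assms _ c0, where \<alpha>=\<alpha> and \<beta>=\<beta>, folded c1_def m1_def]
  have P1: "\<forall>\<tau> u0 v0 U V U2 V2.
       0 < \<tau> \<and> \<tau> < 1 \<and>
       (\<lambda>j. (cmod (u0 j))\<^sup>2 + (cmod (v0 j))\<^sup>2) summable_on UNIV \<and>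
       (\<Sum>\<^sub>\<infinity>j. ((cmod (u0 j))\<^sup>2 + (cmod (v0 j))\<^sup>2) * \<tau>) \<le> c0 \<and>
       time_splitting m \<alpha> \<beta> \<tau> u0 v0 U V U2 V2 \<longrightarrow>
       (\<forall>j n.
          (cmod (U2 j n \<tau>))\<^sup>2 \<le> (cmod (U2 j n 0))\<^sup>2
             + m1 * ((cmod (U2 j n 0))\<^sup>2 + (cmod (V2 j n 0))\<^sup>2) * \<tau>
             + c1 * (cmod (U2 j n 0))\<^sup>2 * (cmod (V2 j n 0))\<^sup>2 * \<tau> \<and>
          (cmod (V2 j n \<tau>))\<^sup>2 \<le> (cmod (V2 j n 0))\<^sup>2
             + m1 * ((cmod (U2 j n 0))\<^sup>2 + (cmod (V2 j n 0))\<^sup>2) * \<tau>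
             + c1 * (cmod (U2 j n 0))\<^sup>2 * (cmod (V2 j n 0))\<^sup>2 * \<tau>)"
  proof (intro allI, rule impI)
    fix \<tau> u0 v0 U V U2 V2
    assume H: "0 < \<tau> \<and> \<tau> < 1 \<and>
       (\<lambda>j. (cmod (u0 j))\<^sup>2 + (cmod (v0 j))\<^sup>2) summable_on UNIV \<and>
       (\<Sum>\<^sub>\<infinity>j. ((cmod (u0 j))\<^sup>2 + (cmod (v0 j))\<^sup>2) * \<tau>) \<le> c0 \<and>
       time_splitting m \<alpha> \<beta> \<tau> u0 v0 U V U2 V2"
    then show "\<forall>j n.
          (cmod (U2 j n \<tau>))\<^sup>2 \<le> (cmod (U2 j n 0))\<^sup>2
             + m1 * ((cmod (U2 j n 0))\<^sup>2 + (cmod (V2 j n 0))\<^sup>2) * \<tau>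
             + c1 * (cmod (U2 j n 0))\<^sup>2 * (cmod (V2 j n 0))\<^sup>2 * \<tau> \<and>
          (cmod (V2 j n \<tau>))\<^sup>2 \<le> (cmod (V2 j n 0))\<^sup>2
             + m1 * ((cmod (U2 j n 0))\<^sup>2 + (cmod (V2 j n 0))\<^sup>2) * \<tau>
             + c1 * (cmod (U2 j n 0))\<^sup>2 * (cmod (V2 j n 0))\<^sup>2 * \<tau>"
      using core[of \<tau> u0 v0 U V U2 V2] by blast
  qed
  have P2: "\<forall>T>0. \<exists>c2>0. \<forall>\<tau> u0 v0 U V U2 V2.
       0 < \<tau> \<and> \<tau> < 1 \<and>
       (\<lambda>j. (cmod (u0 j))\<^sup>2 + (cmod (v0 j))\<^sup>2) summable_on UNIV \<and>
       (\<Sum>\<^sub>\<infinity>j. ((cmod (u0 j))\<^sup>2 + (cmod (v0 j))\<^sup>2) * \<tau>) \<le> c0 \<and>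
       time_splitting m \<alpha> \<beta> \<tau> u0 v0 U V U2 V2 \<longrightarrow>
       (\<forall>j n. n \<le> nat \<lfloor>T / \<tau>\<rfloor> + 1 \<longrightarrow>
          (cmod (U j n))\<^sup>2 \<le> c2 * ((cmod (u0 (j - int n)))\<^sup>2 + m1 * c0) \<and>
          (cmod (V j n))\<^sup>2 \<le> c2 * ((cmod (v0 (j + int n)))\<^sup>2 + m1 * c0))"
  proof (intro allI impI)
    fix T :: real assume T: "T > 0"
    define c2 where "c2 = exp (m1*(T+1) + c1*c0)"
    have "c2 > 0" by (simp add: c2_def)
    moreover have "\<forall>\<tau> u0 v0 U V U2 V2.
       0 < \<tau> \<and> \<tau> < 1 \<and>
       (\<lambda>j. (cmod (u0 j))\<^sup>2 + (cmod (v0 j))\<^sup>2) summable_on UNIV \<and>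
       (\<Sum>\<^sub>\<infinity>j. ((cmod (u0 j))\<^sup>2 + (cmod (v0 j))\<^sup>2) * \<tau>) \<le> c0 \<and>
       time_splitting m \<alpha> \<beta> \<tau> u0 v0 U V U2 V2 \<longrightarrow>
       (\<forall>j n. n \<le> nat \<lfloor>T / \<tau>\<rfloor> + 1 \<longrightarrow>
          (cmod (U j n))\<^sup>2 \<le> c2 * ((cmod (u0 (j - int n)))\<^sup>2 + m1 * c0) \<and>
          (cmod (V j n))\<^sup>2 \<le> c2 * ((cmod (v0 (j + int n)))\<^sup>2 + m1 * c0))"
    proof (intro allI impI)
      fix \<tau> u0 v0 U V U2 V2 j n
      assume H: "0 < \<tau> \<and> \<tau> < 1 \<and>
         (\<lambda>j. (cmod (u0 j))\<^sup>2 + (cmod (v0 j))\<^sup>2) summable_on UNIV \<and>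
         (\<Sum>\<^sub>\<infinity>j. ((cmod (u0 j))\<^sup>2 + (cmod (v0 j))\<^sup>2) * \<tau>) \<le> c0 \<and>
         time_splitting m \<alpha> \<beta> \<tau> u0 v0 U V U2 V2"
        and nb: "n \<le> nat \<lfloor>T / \<tau>\<rfloor> + 1"
      have tau: "0 < \<tau>" "\<tau> < 1" using H by auto
      have C: "(cmod (U j n))\<^sup>2 \<le> exp (m1*\<tau>*n + c1*c0) * ((cmod (u0 (j - int n)))\<^sup>2 + m1 * c0) \<and>
          (cmod (V j n))\<^sup>2 \<le> exp (m1*\<tau>*n + c1*c0) * ((cmod (v0 (j + int n)))\<^sup>2 + m1 * c0)"
        using core[of \<tau> u0 v0 U V U2 V2] H by blast
      have fl: "0 \<le> \<lfloor>T / \<tau>\<rfloor>" using T tau by simp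
      have "real n \<le> real (nat \<lfloor>T / \<tau>\<rfloor>) + 1" using nb by linarith
      also have "real (nat \<lfloor>T / \<tau>\<rfloor>) = of_int \<lfloor>T / \<tau>\<rfloor>" using fl by simp
      also have "of_int \<lfloor>T / \<tau>\<rfloor> \<le> T / \<tau>" by (rule of_int_floor_le)
      finally have "real n \<le> T / \<tau> + 1" by simp
      then have "\<tau> * real n \<le> \<tau> * (T / \<tau> + 1)" using tau by (simp add: mult_left_mono)
      also have "\<dots> = T + \<tau>" using tau by (simp add: field_simps)
      finally have tn: "\<tau> * real n \<le> T + 1" using tau by linarith
      have "m1*\<tau>*n \<le> m1*(T+1)" using tn m1p by (simp add: mult.assoc mult_left_mono)
      then have ex: "exp (m1*\<tau>*n + c1*c0) \<le> c2" by (simp add: c2_def)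
      have nn1: "0 \<le> (cmod (u0 (j - int n)))\<^sup>2 + m1 * c0" using m1p c0 by simp
      have nn2: "0 \<le> (cmod (v0 (j + int n)))\<^sup>2 + m1 * c0" using m1p c0 by simp
      show "(cmod (U j n))\<^sup>2 \<le> c2 * ((cmod (u0 (j - int n)))\<^sup>2 + m1 * c0) \<and>
          (cmod (V j n))\<^sup>2 \<le> c2 * ((cmod (v0 (j + int n)))\<^sup>2 + m1 * c0)"
        using C mult_right_mono[OF ex nn1] mult_right_mono[OF ex nn2] by linarith
    qed
    ultimately show "\<exists>c2>0. \<forall>\<tau> u0 v0 U V U2 V2.
       0 < \<tau> \<and> \<tau> < 1 \<and>
       (\<lambda>j. (cmod (u0 j))\<^sup>2 + (cmod (v0 j))\<^sup>2) summable_on UNIV \<and>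
       (\<Sum>\<^sub>\<infinity>j. ((cmod (u0 j))\<^sup>2 + (cmod (v0 j))\<^sup>2) * \<tau>) \<le> c0 \<and>
       time_splitting m \<alpha> \<beta> \<tau> u0 v0 U V U2 V2 \<longrightarrow>
       (\<forall>j n. n \<le> nat \<lfloor>T / \<tau>\<rfloor> + 1 \<longrightarrow>
          (cmod (U j n))\<^sup>2 \<le> c2 * ((cmod (u0 (j - int n)))\<^sup>2 + m1 * c0) \<and>
          (cmod (V j n))\<^sup>2 \<le> c2 * ((cmod (v0 (j + int n)))\<^sup>2 + m1 * c0))"
      by blast
  qed
  show "\<exists>c1>0. \<exists>m1>0.
    (\<forall>\<tau> u0 v0 U V U2 V2.
       0 < \<tau> \<and> \<tau> < 1 \<and>
       (\<lambda>j. (cmod (u0 j))\<^sup>2 + (cmod (v0 j))\<^sup>2) summable_on UNIV \<and>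
       (\<Sum>\<^sub>\<infinity>j. ((cmod (u0 j))\<^sup>2 + (cmod (v0 j))\<^sup>2) * \<tau>) \<le> c0 \<and>
       time_splitting m \<alpha> \<beta> \<tau> u0 v0 U V U2 V2 \<longrightarrow>
       (\<forall>j n.
          (cmod (U2 j n \<tau>))\<^sup>2 \<le> (cmod (U2 j n 0))\<^sup>2
             + m1 * ((cmod (U2 j n 0))\<^sup>2 + (cmod (V2 j n 0))\<^sup>2) * \<tau>
             + c1 * (cmod (U2 j n 0))\<^sup>2 * (cmod (V2 j n 0))\<^sup>2 * \<tau> \<and>
          (cmod (V2 j n \<tau>))\<^sup>2 \<le> (cmod (V2 j n 0))\<^sup>2
             + m1 * ((cmod (U2 j n 0))\<^sup>2 + (cmod (V2 j n 0))\<^sup>2) * \<tau>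
             + c1 * (cmod (U2 j n 0))\<^sup>2 * (cmod (V2 j n 0))\<^sup>2 * \<tau>)) \<and>
    (\<forall>T>0. \<exists>c2>0. \<forall>\<tau> u0 v0 U V U2 V2.
       0 < \<tau> \<and> \<tau> < 1 \<and>
       (\<lambda>j. (cmod (u0 j))\<^sup>2 + (cmod (v0 j))\<^sup>2) summable_on UNIV \<and>
       (\<Sum>\<^sub>\<infinity>j. ((cmod (u0 j))\<^sup>2 + (cmod (v0 j))\<^sup>2) * \<tau>) \<le> c0 \<and>
       time_splitting m \<alpha> \<beta> \<tau> u0 v0 U V U2 V2 \<longrightarrow>
       (\<forall>j n. n \<le> nat \<lfloor>T / \<tau>\<rfloor> + 1 \<longrightarrow>
          (cmod (U j n))\<^sup>2 \<le> c2 * ((cmod (u0 (j - int n)))\<^sup>2 + m1 * c0) \<and>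
          (cmod (V j n))\<^sup>2 \<le> c2 * ((cmod (v0 (j + int n)))\<^sup>2 + m1 * c0)))"
    using P1 P2 c1p m1p by blast
qed

end
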